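(* Let $X$ be a paracompact Hausdorff space. Then the following are equivalent: (1) $X$ is Hurewicz; (2) $X$ is set strongly star Hurewicz; (3) $X$ is strongly star Hurewicz; (4) $X$ is set star Hurewicz; (5) $X$ is star Hurewicz.
   Context: For a subset $A$ of a space $X$ and a collection $\mathcal{U}$ of subsets of $X$, ${\rm St}(A,\mathcal{U}) = \bigcup\{U \in \mathcal{U}: U \cap A \neq \emptyset\}$. A space $X$ is Hurewicz if for each sequence $(\mathcal{U}_n: n \in \mathbb{N})$ of open covers of $X$ there are finite $\mathcal{V}_n \subset \mathcal{U}_n$ such that each $x \in X$ lies in $\bigcup\mathcal{V}_n$ for all but finitely many $n$. $X$ is star Hurewicz if for each sequence $(\mathcal{U}_n)$ of open covers of $X$ there are finite $\mathcal{V}_n \subset \mathcal{U}_n$ such that each $x\in X$ lies in ${\rm St}(\bigcup\mathcal{V}_n,\mathcal{U}_n)$ for all but finitely many $n$. $X$ is strongly star Hurewicz if for each sequence $(\mathcal{U}_n)$ of open covers of $X$ there are finite sets $F_n \subset X$ such that each $x \in X$ lies in ${\rm St}(F_n,\mathcal{U}_n)$ for all but finitely many $n$. $X$ is set star Hurewicz if for each nonempty $A \subset X$ and each sequence $(\mathcal{U}_n: n\in\mathbb{N})$ of collections of sets open in $X$ with $\overline{A} \subset \bigcup\mathcal{U}_n$ for all $n$, there are finite $\mathcal{V}_n \subset \mathcal{U}_n$ such that each $x \in A$ lies in ${\rm St}(\bigcup\mathcal{V}_n,\mathcal{U}_n)$ for all but finitely many $n$. $X$ is set strongly star Hurewicz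 if for each nonempty $A \subset X$ and each such sequence $(\mathcal{U}_n)$ there are finite sets $F_n \subset \overline{A}$ such that each $x \in A$ lies in ${\rm St}(F_n,\mathcal{U}_n)$ for all but finitely many $n$. *)

theory Defs
  imports "HOL-Analysis.Analysis"
begin

definition St :: "'a set \<Rightarrow> 'a set set \<Rightarrow> 'a set" where
  "St A \<U> = \<Union>{U \<in> \<U>. U \<inter> A \<noteq> {}}"

definition open_cover :: "'a topology \<Rightarrow> 'a set set \<Rightarrow> bool" where
  "open_cover X \<U> \<longleftrightarrow> (\<forall>U\<in>\<U>. openin X U) \<and> \<Union>\<U> = topspace X"

definition paracompact_space :: "'a topology \<Rightarrow> bool" where
  "paracompact_space X \<longleftrightarrow>
     (\<forall>\<U>. open_cover X \<U> \<longrightarrow>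
        (\<exists>\<V>. open_cover X \<V> \<and> (\<forall>V\<in>\<V>. \<exists>U\<in>\<U>. V \<subseteq> U) \<and> locally_finite_in X \<V>))"

definition Hurewicz_space :: "'a topology \<Rightarrow> bool" where
  "Hurewicz_space X \<longleftrightarrow>
     (\<forall>\<U> :: nat \<Rightarrow> 'a set set. (\<forall>n. open_cover X (\<U> n)) \<longrightarrow>
        (\<exists>\<V>. (\<forall>n. finite (\<V> n) \<and> \<V> n \<subseteq> \<U> n) \<and>
             (\<forall>x\<in>topspace X. \<forall>\<^sub>F n in sequentially. x \<in> \<Union>(\<V> n))))"

definition star_Hurewicz_space :: "'a topology \<Rightarrow> bool" where
  "star_Hurewicz_space X \<longleftrightarrow>
     (\<forall>\<U> :: nat \<Rightarrow> 'a set set. (\<forall>n. open_cover X (\<U> n)) \<longrightarrow>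
        (\<exists>\<V>. (\<forall>n. finite (\<V> n) \<and> \<V> n \<subseteq> \<U> n) \<and>
             (\<forall>x\<in>topspace X. \<forall>\<^sub>F n in sequentially. x \<in> St (\<Union>(\<V> n)) (\<U> n))))"

definition strongly_star_Hurewicz_space :: "'a topology \<Rightarrow> bool" where
  "strongly_star_Hurewicz_space X \<longleftrightarrow>
     (\<forall>\<U> :: nat \<Rightarrow> 'a set set. (\<forall>n. open_cover X (\<U> n)) \<longrightarrow>
        (\<exists>F :: nat \<Rightarrow> 'a set. (\<forall>n. finite (F n) \<and> F n \<subseteq> topspace X) \<and>
             (\<forall>x\<in>topspace X. \<forall>\<^sub>F n in sequentially. x \<in> St (F n) (\<U> n))))"

definition set_star_Hurewicz_space :: "'a topology \<Rightarrow> bool" where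
  "set_star_Hurewicz_space X \<longleftrightarrow>
     (\<forall>A \<U>. A \<subseteq> topspace X \<and> A \<noteq> {} \<and>
        (\<forall>n. (\<forall>U\<in>\<U> n. openin X U) \<and> X closure_of A \<subseteq> \<Union>(\<U> n)) \<longrightarrow>
        (\<exists>\<V>. (\<forall>n::nat. finite (\<V> n) \<and> \<V> n \<subseteq> \<U> n) \<and>
             (\<forall>x\<in>A. \<forall>\<^sub>F n in sequentially. x \<in> St (\<Union>(\<V> n)) (\<U> n))))"

definition set_strongly_star_Hurewicz_space :: "'a topology \<Rightarrow> bool" where
  "set_strongly_star_Hurewicz_space X \<longleftrightarrow>
     (\<forall>A \<U>. A \<subseteq> topspace X \<and> A \<noteq> {} \<and>
        (\<forall>n. (\<forall>U\<in>\<U> n. openin X U) \<and> X closure_of A \<subseteq> \<Union>(\<U> n)) \<longrightarrow>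
        (\<exists>F. (\<forall>n::nat. finite (F n) \<and> F n \<subseteq> X closure_of A) \<and>
             (\<forall>x\<in>A. \<forall>\<^sub>F n in sequentially. x \<in> St (F n) (\<U> n))))"

end

theory Submission
  imports Defs
begin

lemma pick_finite:
  assumes "finite F" "F \<subseteq> \<Union>\<U>"
  shows "\<exists>\<V>. finite \<V> \<and> \<V> \<subseteq> \<U> \<and> St F \<U> \<subseteq> St (\<Union>\<V>) \<U>"
proof -
  have "\<forall>p\<in>F. \<exists>U\<in>\<U>. p \<in> U" using assms(2) by blast
  then obtain g where g: "\<forall>p\<in>F. g p \<in> \<U> \<and> p \<in> g p" by metis
  show ?thesis
  proof (intro exI conjI)
    show "finite (g ` F)" using assms(1) by simp
    show "g ` F \<subseteq> \<U>" using g by auto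
    show "St F \<U> \<subseteq> St (\<Union>(g ` F)) \<U>"
      unfolding St_def using g by blast
  qed
qed

lemma H_SSH:
  assumes "Hurewicz_space X"
  shows "set_strongly_star_Hurewicz_space X"
  unfolding set_strongly_star_Hurewicz_space_def
proof (intro allI impI)
  fix A and \<U> :: "nat \<Rightarrow> 'a set set"
  assume h: "A \<subseteq> topspace X \<and> A \<noteq> {} \<and>
        (\<forall>n. (\<forall>U\<in>\<U> n. openin X U) \<and> X closure_of A \<subseteq> \<Union>(\<U> n))"
  define K where "K = X closure_of A"
  define U' where "U' n = {U \<in> \<U> n. U \<inter> K \<noteq> {}} \<union> {topspace X - K}" for n
  have oc: "open_cover X (U' n)" for n
    unfolding open_cover_def
  proof
    show "\<forall>U\<in>U' n. openin X U"
    proof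
      fix U assume "U \<in> U' n"
      then consider "U \<in> \<U> n" | "U = topspace X - K" unfolding U'_def by blast
      then show "openin X U"
      proof cases
        case 1 then show ?thesis using h by blast
      next
        case 2
        have "closedin X K" unfolding K_def by (rule closedin_closure_of)
        then show ?thesis unfolding 2 by (rule openin_diff[OF openin_topspace])
      qed
    qed
    have "\<Union>(U' n) \<subseteq> topspace X"
    proof -
      have "\<And>U. U \<in> \<U> n \<Longrightarrow> U \<subseteq> topspace X" using h openin_subset by blast
      then show ?thesis unfolding U'_def by blast
    qed
    moreover have "K \<subseteq> topspace X" unfolding K_def by (rule closure_of_subset_topspace)
    moreover have "K \<subseteq> \<Union>(U' n)"
    proof
      fix p assume p: "p \<in> K"
      have "K \<subseteq> \<Union>(\<U> n)" using h unfolding K_def by blast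
      with p obtain U where "U \<in> \<U> n" "p \<in> U" by blast
      then have "U \<in> U' n" "p \<in> U" using p unfolding U'_def by blast+
      then show "p \<in> \<Union>(U' n)" by blast
    qed
    moreover have "topspace X - K \<in> U' n" unfolding U'_def by blast
    ultimately show "\<Union>(U' n) = topspace X" by blast
  qed
  have oc': "\<forall>n. open_cover X (U' n)" using oc by blast
  have HH: "\<forall>\<U> :: nat \<Rightarrow> 'a set set. (\<forall>n. open_cover X (\<U> n)) \<longrightarrow>
        (\<exists>\<V>. (\<forall>n. finite (\<V> n) \<and> \<V> n \<subseteq> \<U> n) \<and>
             (\<forall>x\<in>topspace X. \<forall>\<^sub>F n in sequentially. x \<in> \<Union>(\<V> n)))"
    using assms unfolding Hurewicz_space_def .
  obtain \<V> where V: "\<forall>n. finite (\<V> n) \<and> \<V> n \<subseteq> U' n"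
    and ev: "\<forall>x\<in>topspace X. \<forall>\<^sub>F n in sequentially. x \<in> \<Union>(\<V> n)"
    using mp[OF spec[OF HH, of U'] oc'] by blast
  have "\<forall>U. \<exists>p. U \<inter> K \<noteq> {} \<longrightarrow> p \<in> U \<inter> K" by blast
  then obtain f where f: "\<And>U. U \<inter> K \<noteq> {} \<Longrightarrow> f U \<in> U \<inter> K" by metis
  define F where "F n = f ` {U \<in> \<V> n. U \<in> \<U> n \<and> U \<inter> K \<noteq> {}}" for n
  show "\<exists>F. (\<forall>n::nat. finite (F n) \<and> F n \<subseteq> X closure_of A) \<and>
             (\<forall>x\<in>A. \<forall>\<^sub>F n in sequentially. x \<in> St (F n) (\<U> n))"
  proof (intro exI conjI ballI allI)
    fix n
    show "finite (F n)" unfolding F_def using V by auto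
    show "F n \<subseteq> X closure_of A" unfolding F_def K_def[symmetric] using f by blast
  next
    fix x assume xA: "x \<in> A"
    have xK: "x \<in> K" unfolding K_def using xA h closure_of_subset by blast
    have "x \<in> topspace X" using xA h by blast
    with ev have "\<forall>\<^sub>F n in sequentially. x \<in> \<Union>(\<V> n)" by blast
    then show "\<forall>\<^sub>F n in sequentially. x \<in> St (F n) (\<U> n)"
    proof (rule eventually_mono)
      fix n assume "x \<in> \<Union>(\<V> n)"
      then obtain U where U: "U \<in> \<V> n" "x \<in> U" by blast
      then have "U \<in> U' n" using V by blast
      with U xK have U2: "U \<in> \<U> n" "U \<inter> K \<noteq> {}" unfolding U'_def by auto
      then have "f U \<in> F n" unfolding F_def using U by blast
      moreover have "f U \<in> U" using f U2 by blast
      ultimately show "x \<in> St (F n) (\<U> n)" unfolding St_def using U U2 by blast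
    qed
  qed
qed

lemma SSH_SS:
  assumes "set_strongly_star_Hurewicz_space X"
  shows "strongly_star_Hurewicz_space X"
  unfolding strongly_star_Hurewicz_space_def
proof (intro allI impI)
  fix \<U> :: "nat \<Rightarrow> 'a set set"
  assume oc: "\<forall>n. open_cover X (\<U> n)"
  show "\<exists>F :: nat \<Rightarrow> 'a set. (\<forall>n. finite (F n) \<and> F n \<subseteq> topspace X) \<and>
             (\<forall>x\<in>topspace X. \<forall>\<^sub>F n in sequentially. x \<in> St (F n) (\<U> n))"
  proof (cases "topspace X = {}")
    case True
    then show ?thesis by (intro exI[of _ "\<lambda>n. {}"]) auto
  next
    case False
    have "\<forall>n. (\<forall>U\<in>\<U> n. openin X U) \<and> X closure_of (topspace X) \<subseteq> \<Union>(\<U> n)"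
      using oc unfolding open_cover_def by simp
    then have "\<exists>F. (\<forall>n::nat. finite (F n) \<and> F n \<subseteq> X closure_of (topspace X)) \<and>
             (\<forall>x\<in>topspace X. \<forall>\<^sub>F n in sequentially. x \<in> St (F n) (\<U> n))"
      using False assms unfolding set_strongly_star_Hurewicz_space_def
      by (elim allE[of _ "topspace X"] allE[of _ \<U>]) blast
    then show ?thesis by (simp add: closure_of_topspace)
  qed
qed

lemma SS_Star:
  assumes "strongly_star_Hurewicz_space X"
  shows "star_Hurewicz_space X"
  unfolding star_Hurewicz_space_def
proof (intro allI impI)
  fix \<U> :: "nat \<Rightarrow> 'a set set"
  assume oc: "\<forall>n. open_cover X (\<U> n)"
  then obtain F where F: "\<forall>n. finite (F n) \<and> F n \<subseteq> topspace X"
    and ev: "\<forall>x\<in>topspace X. \<forall>\<^sub>F n in sequentially. x \<in> St (F n) (\<U> n)"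
    using assms unfolding strongly_star_Hurewicz_space_def by blast
  have "\<forall>n. \<exists>\<V>. finite \<V> \<and> \<V> \<subseteq> \<U> n \<and> St (F n) (\<U> n) \<subseteq> St (\<Union>\<V>) (\<U> n)"
  proof
    fix n
    have "open_cover X (\<U> n)" using oc by (rule spec)
    then have "\<Union>(\<U> n) = topspace X" unfolding open_cover_def by (rule conjunct2)
    moreover have "finite (F n)" "F n \<subseteq> topspace X" using F by auto
    ultimately show "\<exists>\<V>. finite \<V> \<and> \<V> \<subseteq> \<U> n \<and> St (F n) (\<U> n) \<subseteq> St (\<Union>\<V>) (\<U> n)"
      using pick_finite[of "F n" "\<U> n"] by simp
  qed
  from choice[OF this] obtain \<V> where V: "\<forall>n. finite (\<V> n) \<and> \<V> n \<subseteq> \<U> n \<and> St (F n) (\<U> n) \<subseteq> St (\<Union>(\<V> n)) (\<U> n)"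
    by blast
  show "\<exists>\<V>. (\<forall>n. finite (\<V> n) \<and> \<V> n \<subseteq> \<U> n) \<and>
             (\<forall>x\<in>topspace X. \<forall>\<^sub>F n in sequentially. x \<in> St (\<Union>(\<V> n)) (\<U> n))"
  proof (intro exI[of _ \<V>] conjI allI ballI)
    fix n show "finite (\<V> n)" using V by blast
    show "\<V> n \<subseteq> \<U> n" using V by blast
  next
    fix x assume "x \<in> topspace X"
    then have "\<forall>\<^sub>F n in sequentially. x \<in> St (F n) (\<U> n)" using ev by blast
    then show "\<forall>\<^sub>F n in sequentially. x \<in> St (\<Union>(\<V> n)) (\<U> n)"
    proof (rule eventually_mono)
      fix n assume "x \<in> St (F n) (\<U> n)"
      then show "x \<in> St (\<Union>(\<V> n)) (\<U> n)" using V by blast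
    qed
  qed
qed

lemma SSH_SetStar:
  assumes "set_strongly_star_Hurewicz_space X"
  shows "set_star_Hurewicz_space X"
  unfolding set_star_Hurewicz_space_def
proof (intro allI impI)
  fix A and \<U> :: "nat \<Rightarrow> 'a set set"
  assume h: "A \<subseteq> topspace X \<and> A \<noteq> {} \<and>
        (\<forall>n. (\<forall>U\<in>\<U> n. openin X U) \<and> X closure_of A \<subseteq> \<Union>(\<U> n))"
  then obtain F where F: "\<forall>n::nat. finite (F n) \<and> F n \<subseteq> X closure_of A"
    and ev: "\<forall>x\<in>A. \<forall>\<^sub>F n in sequentially. x \<in> St (F n) (\<U> n)"
    using assms[unfolded set_strongly_star_Hurewicz_space_def, rule_format, OF h] by blast
  have "\<forall>n. \<exists>\<V>. finite \<V> \<and> \<V> \<subseteq> \<U> n \<and> St (F n) (\<U> n) \<subseteq> St (\<Union>\<V>) (\<U> n)"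
  proof
    fix n
    have "X closure_of A \<subseteq> \<Union>(\<U> n)" using h by blast
    moreover have "finite (F n)" "F n \<subseteq> X closure_of A" using F by auto
    ultimately have "F n \<subseteq> \<Union>(\<U> n)" by (meson order_trans)
    then show "\<exists>\<V>. finite \<V> \<and> \<V> \<subseteq> \<U> n \<and> St (F n) (\<U> n) \<subseteq> St (\<Union>\<V>) (\<U> n)"
      using pick_finite[of "F n" "\<U> n"] \<open>finite (F n)\<close> by simp
  qed
  from choice[OF this] obtain \<V> where V: "\<forall>n. finite (\<V> n) \<and> \<V> n \<subseteq> \<U> n \<and> St (F n) (\<U> n) \<subseteq> St (\<Union>(\<V> n)) (\<U> n)"
    by blast
  show "\<exists>\<V>. (\<forall>n::nat. finite (\<V> n) \<and> \<V> n \<subseteq> \<U> n) \<and>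
             (\<forall>x\<in>A. \<forall>\<^sub>F n in sequentially. x \<in> St (\<Union>(\<V> n)) (\<U> n))"
  proof (intro exI[of _ \<V>] conjI allI ballI)
    fix n show "finite (\<V> n)" using V by blast
    show "\<V> n \<subseteq> \<U> n" using V by blast
  next
    fix x assume "x \<in> A"
    then have "\<forall>\<^sub>F n in sequentially. x \<in> St (F n) (\<U> n)" using ev by blast
    then show "\<forall>\<^sub>F n in sequentially. x \<in> St (\<Union>(\<V> n)) (\<U> n)"
    proof (rule eventually_mono)
      fix n assume "x \<in> St (F n) (\<U> n)"
      then show "x \<in> St (\<Union>(\<V> n)) (\<U> n)" using V by blast
    qed
  qed
qed

lemma SetStar_Star:
  assumes "set_star_Hurewicz_space X"
  shows "star_Hurewicz_space X"
  unfolding star_Hurewicz_space_def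
proof (intro allI impI)
  fix \<U> :: "nat \<Rightarrow> 'a set set"
  assume oc: "\<forall>n. open_cover X (\<U> n)"
  show "\<exists>\<V>. (\<forall>n. finite (\<V> n) \<and> \<V> n \<subseteq> \<U> n) \<and>
             (\<forall>x\<in>topspace X. \<forall>\<^sub>F n in sequentially. x \<in> St (\<Union>(\<V> n)) (\<U> n))"
  proof (cases "topspace X = {}")
    case True
    then show ?thesis by (intro exI[of _ "\<lambda>n. {}"]) auto
  next
    case False
    have "\<forall>n. (\<forall>U\<in>\<U> n. openin X U) \<and> X closure_of (topspace X) \<subseteq> \<Union>(\<U> n)"
      using oc unfolding open_cover_def by simp
    then show ?thesis
      using False assms unfolding set_star_Hurewicz_space_def
      by (elim allE[of _ "topspace X"] allE[of _ \<U>]) blast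
  qed
qed


lemma Star_H:
  assumes par: "paracompact_space X" and st: "star_Hurewicz_space X"
  shows "Hurewicz_space X"
  unfolding Hurewicz_space_def
proof (intro allI impI)
  fix \<U> :: "nat \<Rightarrow> 'a set set"
  assume oc: "\<forall>n. open_cover X (\<U> n)"
  have "\<forall>n. \<exists>\<V>. open_cover X \<V> \<and> (\<forall>V\<in>\<V>. \<exists>U\<in>\<U> n. V \<subseteq> U) \<and> locally_finite_in X \<V>"
    using par oc unfolding paracompact_space_def by blast
  then obtain \<V> where V: "\<And>n. open_cover X (\<V> n)"
    "\<And>n. \<forall>V\<in>\<V> n. \<exists>U\<in>\<U> n. V \<subseteq> U" "\<And>n. locally_finite_in X (\<V> n)"
    by (metis (no_types))
  define C where "C n = {G \<inter> W | G W. openin X G \<and> W \<in> \<V> n \<and> finite {W'\<in>\<V> n. W' \<inter> G \<noteq> {}}}" for n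
  have Coc: "open_cover X (C n)" for n
    unfolding open_cover_def
  proof
    have Vo: "\<forall>W\<in>\<V> n. openin X W" and Vu: "\<Union>(\<V> n) = topspace X"
      using V(1)[of n] unfolding open_cover_def by auto
    show "\<forall>U\<in>C n. openin X U" unfolding C_def using Vo by blast
    show "\<Union>(C n) = topspace X"
    proof
      show "\<Union>(C n) \<subseteq> topspace X" unfolding C_def using openin_subset by blast
      show "topspace X \<subseteq> \<Union>(C n)"
      proof
        fix p assume p: "p \<in> topspace X"
        then obtain G where G: "openin X G" "p \<in> G" "finite {W'\<in>\<V> n. W' \<inter> G \<noteq> {}}"
          using V(3)[of n] unfolding locally_finite_in_def by blast
        obtain W where W: "W \<in> \<V> n" "p \<in> W" using p Vu by blast
        have "G \<inter> W \<in> C n" unfolding C_def using G W by blast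
        then show "p \<in> \<Union>(C n)" using G W by blast
      qed
    qed
  qed
  have Coc': "\<forall>n. open_cover X (C n)" using Coc by blast
  have SH: "\<forall>\<U> :: nat \<Rightarrow> 'a set set. (\<forall>n. open_cover X (\<U> n)) \<longrightarrow>
        (\<exists>\<V>. (\<forall>n. finite (\<V> n) \<and> \<V> n \<subseteq> \<U> n) \<and>
             (\<forall>x\<in>topspace X. \<forall>\<^sub>F n in sequentially. x \<in> St (\<Union>(\<V> n)) (\<U> n)))"
    using st unfolding star_Hurewicz_space_def .
  obtain S where S: "\<forall>n. finite (S n) \<and> S n \<subseteq> C n"
    and ev: "\<forall>x\<in>topspace X. \<forall>\<^sub>F n in sequentially. x \<in> St (\<Union>(S n)) (C n)"
    using mp[OF spec[OF SH, of C] Coc'] by blast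
  define u where "u n W = (SOME U. U \<in> \<U> n \<and> W \<subseteq> U)" for n W
  have u: "u n W \<in> \<U> n \<and> W \<subseteq> u n W" if "W \<in> \<V> n" for n W
  proof -
    have "\<exists>U. U \<in> \<U> n \<and> W \<subseteq> U" using V(2)[of n] that by blast
    then show ?thesis unfolding u_def by (rule someI_ex)
  qed
  define H where "H n = u n ` {W \<in> \<V> n. \<exists>Z\<in>S n. W \<inter> Z \<noteq> {}}" for n
  show "\<exists>\<V>. (\<forall>n. finite (\<V> n) \<and> \<V> n \<subseteq> \<U> n) \<and>
             (\<forall>x\<in>topspace X. \<forall>\<^sub>F n in sequentially. x \<in> \<Union>(\<V> n))"
  proof (intro exI[of _ H] conjI allI ballI)
    fix n
    have fz: "finite {W \<in> \<V> n. W \<inter> Z \<noteq> {}}" if "Z \<in> S n" for Z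
    proof -
      have "Z \<in> C n" using that S by blast
      then obtain G W0 where Z: "Z = G \<inter> W0" "finite {W'\<in>\<V> n. W' \<inter> G \<noteq> {}}"
        unfolding C_def by blast
      have "{W \<in> \<V> n. W \<inter> Z \<noteq> {}} \<subseteq> {W'\<in>\<V> n. W' \<inter> G \<noteq> {}}" using Z by blast
      then show ?thesis by (rule finite_subset) (rule Z(2))
    qed
    have "{W \<in> \<V> n. \<exists>Z\<in>S n. W \<inter> Z \<noteq> {}} = (\<Union>Z\<in>S n. {W \<in> \<V> n. W \<inter> Z \<noteq> {}})"
      by blast
    moreover have "finite (\<Union>Z\<in>S n. {W \<in> \<V> n. W \<inter> Z \<noteq> {}})"
    proof (rule finite_UN_I)
      show "finite (S n)" using S by blast
      show "\<And>Z. Z \<in> S n \<Longrightarrow> finite {W \<in> \<V> n. W \<inter> Z \<noteq> {}}" by (rule fz)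
    qed
    ultimately have "finite {W \<in> \<V> n. \<exists>Z\<in>S n. W \<inter> Z \<noteq> {}}" by (simp only:)
    then show "finite (H n)" unfolding H_def by (rule finite_imageI)
    show "H n \<subseteq> \<U> n" unfolding H_def using u by blast
  next
    fix x assume x: "x \<in> topspace X"
    with ev have "\<forall>\<^sub>F n in sequentially. x \<in> St (\<Union>(S n)) (C n)" by blast
    then show "\<forall>\<^sub>F n in sequentially. x \<in> \<Union>(H n)"
    proof (rule eventually_mono)
      fix n assume "x \<in> St (\<Union>(S n)) (C n)"
      then obtain Cc Z where Cc: "Cc \<in> C n" "x \<in> Cc" "Z \<in> S n" "Cc \<inter> Z \<noteq> {}"
        unfolding St_def by blast
      then obtain G W where W: "Cc = G \<inter> W" "W \<in> \<V> n" unfolding C_def by blast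
      have "W \<in> {W \<in> \<V> n. \<exists>Z\<in>S n. W \<inter> Z \<noteq> {}}" using W Cc by blast
      then have "u n W \<in> H n" unfolding H_def by blast
      moreover have "x \<in> u n W" using u[OF W(2)] W Cc by blast
      ultimately show "x \<in> \<Union>(H n)" by blast
    qed
  qed
qed

theorem theorem2p6:
  fixes X :: "'a topology"
  assumes "paracompact_space X" and "Hausdorff_space X"
  shows "(Hurewicz_space X \<longleftrightarrow> set_strongly_star_Hurewicz_space X) \<and>
         (set_strongly_star_Hurewicz_space X \<longleftrightarrow> strongly_star_Hurewicz_space X) \<and>
         (strongly_star_Hurewicz_space X \<longleftrightarrow> set_star_Hurewicz_space X) \<and>
         (set_star_Hurewicz_space X \<longleftrightarrow> star_Hurewicz_space X)"
proof -
  have 1: "Hurewicz_space X \<Longrightarrow> set_strongly_star_Hurewicz_space X" by (rule H_SSH)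
  have 2: "set_strongly_star_Hurewicz_space X \<Longrightarrow> strongly_star_Hurewicz_space X" by (rule SSH_SS)
  have 3: "strongly_star_Hurewicz_space X \<Longrightarrow> star_Hurewicz_space X" by (rule SS_Star)
  have 4: "set_strongly_star_Hurewicz_space X \<Longrightarrow> set_star_Hurewicz_space X" by (rule SSH_SetStar)
  have 5: "set_star_Hurewicz_space X \<Longrightarrow> star_Hurewicz_space X" by (rule SetStar_Star)
  have 6: "star_Hurewicz_space X \<Longrightarrow> Hurewicz_space X" by (rule Star_H[OF assms(1)])
  show ?thesis using 1 2 3 4 5 6 by blast
qed

end
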